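(* Let $X$ be a nonempty set and $G\le S_X$. There is a one-to-one correspondence between racks (resp. quandles) $(X,* )$ satisfying $\mathrm{LMlt}(X,* )=G$ and rack envelopes (resp. quandle envelopes) of the form $(G,\Lambda)$. Given such a rack/quandle $(X,* )$, the corresponding envelope is $\mathbf E(X,* )=(G,(L_x:x\in X/G))$; given a rack/quandle envelope $(G,\Lambda)$, the corresponding rack/quandle is $\mathbf R(G,\Lambda)$; these two maps are mutually inverse.
   Context: Permutations act on the right ($xf$ is the image of $x$ under $f$; $fg$ means $f$ first, then $g$); $g^f=f^{-1}gf$, $f^G=\{f^g:g\in G\}$. For $G\le S_X$, $xG$ is the orbit of $x$, $G_x$ its stabilizer, $X/G$ a fixed complete set of orbit representatives; $C_G(H)$ is the centralizer, $Z(H)$ the center. A left quasigroup is a groupoid $(X,* )$ whose left translations $L_x$ ($yL_x=x*y$) are bijections; a rack is a left quasigroup with $x*(y*z)=(x*y)*(x*z)$; a quandle is a rack with $x*x=x$; $\mathrm{LMlt}(X,* )=\langle L_x:x\in X\rangle$. A pair $(G,(\lambda_x:x\in X/G))$ with $G\le S_X$ is a rack folder (resp. quandle folder) if $\lambda_x\in C_G(G_x)$ (resp. $\lambda_x\in Z(G_x)$) for every $x\in X/G$; it is a rack envelope (resp. quandle envelope) if moreover $\langle\bigcup_{x\in X/G}\lambda_x^G\rangle=G$. For a rack folder $(G,\Lambda)$, $\Lambda=(\lambda_x:x\in X/G)$, the rack $\mathbf R(G,\Lambda)=(X,* )$ is defined by $L_y=(\lambda_x)^{g_y}$ whenever $x\in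 X/G$, $y\in xG$ and $g_y\in G$ satisfies $xg_y=y$ (this is independent of the choice of $g_y$). *)

theory Defs
  imports "HOL-Combinatorics.Permutations"
begin

text \<open>Right-action conventions of the paper: x f = f x, and the product fg (f first, then g)
  is g \<circ> f.  Hence the conjugate f^g = g^-1 f g is g \<circ> f \<circ> inv g.\<close>

definition conj_perm :: "('a \<Rightarrow> 'a) \<Rightarrow> ('a \<Rightarrow> 'a) \<Rightarrow> ('a \<Rightarrow> 'a)" where
  "conj_perm f g = g \<circ> f \<circ> inv g"

definition perm_subgroup :: "'a set \<Rightarrow> ('a \<Rightarrow> 'a) set \<Rightarrow> bool" where
  "perm_subgroup X G \<longleftrightarrow> G \<subseteq> {f. f permutes X} \<and> id \<in> G
     \<and> (\<forall>f\<in>G. \<forall>g\<in>G. g \<circ> f \<in> G) \<and> (\<forall>f\<in>G. inv f \<in> G)"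

inductive_set gen_perm :: "('a \<Rightarrow> 'a) set \<Rightarrow> ('a \<Rightarrow> 'a) set" for S where
  gen_id: "id \<in> gen_perm S"
| gen_base: "f \<in> S \<Longrightarrow> f \<in> gen_perm S"
| gen_comp: "f \<in> gen_perm S \<Longrightarrow> g \<in> gen_perm S \<Longrightarrow> g \<circ> f \<in> gen_perm S"
| gen_inv: "f \<in> gen_perm S \<Longrightarrow> inv f \<in> gen_perm S"

definition orbit :: "('a \<Rightarrow> 'a) set \<Rightarrow> 'a \<Rightarrow> 'a set" where
  "orbit G x = {g x | g. g \<in> G}"

definition stabilizer :: "('a \<Rightarrow> 'a) set \<Rightarrow> 'a \<Rightarrow> ('a \<Rightarrow> 'a) set" where
  "stabilizer G x = {g \<in> G. g x = x}"

definition centralizer :: "('a \<Rightarrow> 'a) set \<Rightarrow> ('a \<Rightarrow> 'a) set \<Rightarrow> ('a \<Rightarrow> 'a) set" where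
  "centralizer G H = {g \<in> G. \<forall>h\<in>H. g \<circ> h = h \<circ> g}"

definition center :: "('a \<Rightarrow> 'a) set \<Rightarrow> ('a \<Rightarrow> 'a) set" where
  "center H = centralizer H H"

definition orbit_reps :: "'a set \<Rightarrow> ('a \<Rightarrow> 'a) set \<Rightarrow> 'a set \<Rightarrow> bool" where
  "orbit_reps X G T \<longleftrightarrow> T \<subseteq> X \<and> (\<forall>y\<in>X. \<exists>!x. x \<in> T \<and> y \<in> orbit G x)"

text \<open>Families (\<lambda>_x : x \<in> X/G) are functions on T, normalised to id outside T.\<close>
definition rack_folder :: "'a set \<Rightarrow> ('a \<Rightarrow> 'a) set \<Rightarrow> 'a set \<Rightarrow> ('a \<Rightarrow> 'a \<Rightarrow> 'a) \<Rightarrow> bool" where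
  "rack_folder X G T \<Lambda> \<longleftrightarrow> perm_subgroup X G
     \<and> (\<forall>x\<in>T. \<Lambda> x \<in> centralizer G (stabilizer G x)) \<and> (\<forall>x. x \<notin> T \<longrightarrow> \<Lambda> x = id)"

definition quandle_folder :: "'a set \<Rightarrow> ('a \<Rightarrow> 'a) set \<Rightarrow> 'a set \<Rightarrow> ('a \<Rightarrow> 'a \<Rightarrow> 'a) \<Rightarrow> bool" where
  "quandle_folder X G T \<Lambda> \<longleftrightarrow> perm_subgroup X G
     \<and> (\<forall>x\<in>T. \<Lambda> x \<in> center (stabilizer G x)) \<and> (\<forall>x. x \<notin> T \<longrightarrow> \<Lambda> x = id)"

definition envelope_gen :: "('a \<Rightarrow> 'a) set \<Rightarrow> 'a set \<Rightarrow> ('a \<Rightarrow> 'a \<Rightarrow> 'a) \<Rightarrow> bool" where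
  "envelope_gen G T \<Lambda> \<longleftrightarrow> gen_perm (\<Union>x\<in>T. {conj_perm (\<Lambda> x) g | g. g \<in> G}) = G"

definition rack_envelope :: "'a set \<Rightarrow> ('a \<Rightarrow> 'a) set \<Rightarrow> 'a set \<Rightarrow> ('a \<Rightarrow> 'a \<Rightarrow> 'a) \<Rightarrow> bool" where
  "rack_envelope X G T \<Lambda> \<longleftrightarrow> rack_folder X G T \<Lambda> \<and> envelope_gen G T \<Lambda>"

definition quandle_envelope :: "'a set \<Rightarrow> ('a \<Rightarrow> 'a) set \<Rightarrow> 'a set \<Rightarrow> ('a \<Rightarrow> 'a \<Rightarrow> 'a) \<Rightarrow> bool" where
  "quandle_envelope X G T \<Lambda> \<longleftrightarrow> quandle_folder X G T \<Lambda> \<and> envelope_gen G T \<Lambda>"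

text \<open>Groupoids on X: binary operations, values outside X \<times> X are normalised to undefined.\<close>
definition op_on :: "'a set \<Rightarrow> ('a \<Rightarrow> 'a \<Rightarrow> 'a) \<Rightarrow> bool" where
  "op_on X m \<longleftrightarrow> (\<forall>x\<in>X. \<forall>y\<in>X. m x y \<in> X) \<and> (\<forall>x y. \<not> (x \<in> X \<and> y \<in> X) \<longrightarrow> m x y = undefined)"

definition Ltr :: "'a set \<Rightarrow> ('a \<Rightarrow> 'a \<Rightarrow> 'a) \<Rightarrow> 'a \<Rightarrow> ('a \<Rightarrow> 'a)" where
  "Ltr X m x = (\<lambda>y. if y \<in> X then m x y else y)"

definition left_quasigroup :: "'a set \<Rightarrow> ('a \<Rightarrow> 'a \<Rightarrow> 'a) \<Rightarrow> bool" where
  "left_quasigroup X m \<longleftrightarrow> op_on X m \<and> (\<forall>x\<in>X. bij_betw (m x) X X)"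

definition rack :: "'a set \<Rightarrow> ('a \<Rightarrow> 'a \<Rightarrow> 'a) \<Rightarrow> bool" where
  "rack X m \<longleftrightarrow> left_quasigroup X m
     \<and> (\<forall>x\<in>X. \<forall>y\<in>X. \<forall>z\<in>X. m x (m y z) = m (m x y) (m x z))"

definition quandle :: "'a set \<Rightarrow> ('a \<Rightarrow> 'a \<Rightarrow> 'a) \<Rightarrow> bool" where
  "quandle X m \<longleftrightarrow> rack X m \<and> (\<forall>x\<in>X. m x x = x)"

definition LMlt :: "'a set \<Rightarrow> ('a \<Rightarrow> 'a \<Rightarrow> 'a) \<Rightarrow> ('a \<Rightarrow> 'a) set" where
  "LMlt X m = gen_perm {Ltr X m x | x. x \<in> X}"

text \<open>E(X,*) = (LMlt, (L_x : x \<in> X/G)).\<close>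
definition E_map :: "'a set \<Rightarrow> 'a set \<Rightarrow> ('a \<Rightarrow> 'a \<Rightarrow> 'a) \<Rightarrow> ('a \<Rightarrow> 'a \<Rightarrow> 'a)" where
  "E_map X T m = (\<lambda>x. if x \<in> T then Ltr X m x else id)"

text \<open>R(G,\<Lambda>): L_y = (\<lambda>_x)^(g_y) where x \<in> T, y \<in> xG, x g_y = y.\<close>
definition rep_of :: "('a \<Rightarrow> 'a) set \<Rightarrow> 'a set \<Rightarrow> 'a \<Rightarrow> 'a" where
  "rep_of G T y = (THE x. x \<in> T \<and> y \<in> orbit G x)"

definition R_map :: "'a set \<Rightarrow> ('a \<Rightarrow> 'a) set \<Rightarrow> 'a set \<Rightarrow> ('a \<Rightarrow> 'a \<Rightarrow> 'a) \<Rightarrow> ('a \<Rightarrow> 'a \<Rightarrow> 'a)" where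
  "R_map X G T \<Lambda> = (\<lambda>y z. if y \<in> X \<and> z \<in> X then
      (let x = rep_of G T y; g = (SOME g. g \<in> G \<and> g x = y) in conj_perm (\<Lambda> x) g z)
    else undefined)"

end

theory Submission imports Defs begin

lemma ps_perm: "perm_subgroup X G \<Longrightarrow> g \<in> G \<Longrightarrow> g permutes X"
  unfolding perm_subgroup_def by blast
lemma ps_comp: "perm_subgroup X G \<Longrightarrow> f \<in> G \<Longrightarrow> g \<in> G \<Longrightarrow> g \<circ> f \<in> G"
  unfolding perm_subgroup_def by blast
lemma ps_inv: "perm_subgroup X G \<Longrightarrow> f \<in> G \<Longrightarrow> inv f \<in> G"
  unfolding perm_subgroup_def by blast
lemma ps_id: "perm_subgroup X G \<Longrightarrow> id \<in> G"
  unfolding perm_subgroup_def by blast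

lemma conj_perm_permutes: "f permutes X \<Longrightarrow> g permutes X \<Longrightarrow> conj_perm f g permutes X"
  unfolding conj_perm_def by (intro permutes_compose permutes_inv) auto

lemma conj_perm_in: "perm_subgroup X G \<Longrightarrow> f \<in> G \<Longrightarrow> g \<in> G \<Longrightarrow> conj_perm f g \<in> G"
  unfolding conj_perm_def by (meson ps_comp ps_inv)

lemma rep_of_props:
  assumes "orbit_reps X G T" "y \<in> X"
  shows "rep_of G T y \<in> T \<and> y \<in> orbit G (rep_of G T y)"
proof -
  have "\<exists>!x. x \<in> T \<and> y \<in> orbit G x" using assms unfolding orbit_reps_def by blast
  then show ?thesis unfolding rep_of_def by (rule theI')
qed

lemma rep_of_eq:
  assumes "perm_subgroup X G" "orbit_reps X G T" "x \<in> T" "g \<in> G"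
  shows "rep_of G T (g x) = x"
proof -
  have TX: "T \<subseteq> X" using assms(2) unfolding orbit_reps_def by blast
  have gx: "g x \<in> X" using permutes_in_image[OF ps_perm[OF assms(1,4)]] TX assms(3) by blast
  have o: "g x \<in> orbit G x" using assms(4) unfolding orbit_def by blast
  have u: "\<exists>!x'. x' \<in> T \<and> g x \<in> orbit G x'" using assms(2) gx unfolding orbit_reps_def by blast
  show ?thesis unfolding rep_of_def by (rule the1_equality[OF u]) (use o assms(3) in blast)
qed

lemma conj_comp: "bij g \<Longrightarrow> bij h \<Longrightarrow> conj_perm f (h \<circ> g) = h \<circ> conj_perm f g \<circ> inv h"
  unfolding conj_perm_def by (simp add: o_inv_distrib o_assoc)

lemma conj_id[simp]: "conj_perm f id = f"
  unfolding conj_perm_def by simp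

context
  fixes X G T \<Lambda>
  assumes PS: "perm_subgroup X G" and OR: "orbit_reps X G T" and RF: "rack_folder X G T \<Lambda>"
begin

lemma TX: "T \<subseteq> X" using OR unfolding orbit_reps_def by blast

lemma LamG: "x \<in> T \<Longrightarrow> \<Lambda> x \<in> G"
  using RF unfolding rack_folder_def centralizer_def by blast

lemma Lam_comm: "x \<in> T \<Longrightarrow> k \<in> G \<Longrightarrow> k x = x \<Longrightarrow> \<Lambda> x \<circ> k = k \<circ> \<Lambda> x"
  using RF unfolding rack_folder_def centralizer_def stabilizer_def by blast

lemma conj_indep:
  assumes "x \<in> T" "g \<in> G" "h \<in> G" "g x = h x"
  shows "conj_perm (\<Lambda> x) g = conj_perm (\<Lambda> x) h"
proof -
  define k where "k = inv h \<circ> g"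
  have hp: "h permutes X" and gp: "g permutes X" using ps_perm PS assms by auto
  have kG: "k \<in> G" unfolding k_def by (meson PS assms ps_comp ps_inv)
  have kp: "k permutes X" using ps_perm[OF PS kG] .
  have kx: "k x = x" unfolding k_def using assms(4) permutes_inverses(2)[OF hp] by simp
  have g: "g = h \<circ> k" unfolding k_def using permutes_inv_o(1)[OF hp] by (simp add: o_assoc)
  have "conj_perm (\<Lambda> x) g = h \<circ> conj_perm (\<Lambda> x) k \<circ> inv h"
    unfolding g by (rule conj_comp) (use kp hp permutes_bij in auto)
  also have "conj_perm (\<Lambda> x) k = \<Lambda> x"
  proof -
    have "k \<circ> \<Lambda> x \<circ> inv k = (\<Lambda> x \<circ> k) \<circ> inv k" using Lam_comm[OF assms(1) kG kx] by simp
    also have "\<dots> = \<Lambda> x \<circ> (k \<circ> inv k)" by (simp only: o_assoc)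
    also have "\<dots> = \<Lambda> x" using permutes_inv_o(1)[OF kp] by simp
    finally show ?thesis unfolding conj_perm_def .
  qed
  also have "h \<circ> \<Lambda> x \<circ> inv h = conj_perm (\<Lambda> x) h" unfolding conj_perm_def ..
  finally show ?thesis .
qed


lemma Ltr_R:
  assumes "x \<in> T" "g \<in> G"
  shows "Ltr X (R_map X G T \<Lambda>) (g x) = conj_perm (\<Lambda> x) g"
proof
  fix z
  have gp: "g permutes X" using ps_perm PS assms by auto
  have gx: "g x \<in> X" using permutes_in_image[OF gp] TX assms(1) by blast
  have cp: "conj_perm (\<Lambda> x) g permutes X"
    by (rule conj_perm_permutes[OF ps_perm[OF PS LamG[OF assms(1)]] gp])
  have r: "rep_of G T (g x) = x" by (rule rep_of_eq[OF PS OR assms])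
  have ex: "\<exists>g'. g' \<in> G \<and> g' x = g x" using assms by blast
  define g' where "g' = (SOME g'. g' \<in> G \<and> g' x = g x)"
  have g': "g' \<in> G \<and> g' x = g x" unfolding g'_def by (rule someI_ex[OF ex])
  show "Ltr X (R_map X G T \<Lambda>) (g x) z = conj_perm (\<Lambda> x) g z"
  proof (cases "z \<in> X")
    case True
    then have "Ltr X (R_map X G T \<Lambda>) (g x) z = conj_perm (\<Lambda> x) g' z"
      unfolding Ltr_def R_map_def using gx r by (simp add: g'_def Let_def)
    also have "\<dots> = conj_perm (\<Lambda> x) g z" using conj_indep[OF assms(1) _ assms(2)] g' by simp
    finally show ?thesis .
  next
    case False
    then show ?thesis unfolding Ltr_def using permutes_not_in[OF cp] by simp
  qed
qed

lemma Ltr_R_all: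
  assumes "y \<in> X"
  shows "\<exists>x\<in>T. \<exists>g\<in>G. g x = y \<and> Ltr X (R_map X G T \<Lambda>) y = conj_perm (\<Lambda> x) g"
proof -
  from rep_of_props[OF OR assms] obtain x where "x \<in> T" "y \<in> orbit G x" by blast
  then obtain g where "g \<in> G" "y = g x" unfolding orbit_def by blast
  then show ?thesis using Ltr_R \<open>x \<in> T\<close> by blast
qed

lemma Ltr_R_G: "y \<in> X \<Longrightarrow> Ltr X (R_map X G T \<Lambda>) y \<in> G"
  using Ltr_R_all conj_perm_in[OF PS LamG] by metis

lemma Ltr_R_perm: "y \<in> X \<Longrightarrow> Ltr X (R_map X G T \<Lambda>) y permutes X"
  using Ltr_R_G ps_perm[OF PS] by blast

lemma Ltr_R_conj:
  assumes "h \<in> G" "y \<in> X"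
  shows "h \<circ> Ltr X (R_map X G T \<Lambda>) y \<circ> inv h = Ltr X (R_map X G T \<Lambda>) (h y)"
proof -
  obtain x g where x: "x \<in> T" "g \<in> G" "g x = y" "Ltr X (R_map X G T \<Lambda>) y = conj_perm (\<Lambda> x) g"
    using Ltr_R_all[OF assms(2)] by blast
  have hg: "h \<circ> g \<in> G" using ps_comp[OF PS] x assms by blast
  have "Ltr X (R_map X G T \<Lambda>) (h y) = Ltr X (R_map X G T \<Lambda>) ((h \<circ> g) x)" using x by simp
  also have "\<dots> = conj_perm (\<Lambda> x) (h \<circ> g)" by (rule Ltr_R[OF x(1) hg])
  also have "\<dots> = h \<circ> conj_perm (\<Lambda> x) g \<circ> inv h"
    by (rule conj_comp) (use ps_perm[OF PS] x assms permutes_bij in blast)+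
  finally show ?thesis using x by simp
qed

lemma mR_Ltr: "y \<in> X \<Longrightarrow> z \<in> X \<Longrightarrow> (R_map X G T \<Lambda>) y z = Ltr X (R_map X G T \<Lambda>) y z"
  unfolding Ltr_def by simp

lemma rack_R: "rack X (R_map X G T \<Lambda>)"
  unfolding rack_def left_quasigroup_def op_on_def
proof (intro conjI ballI allI impI)
  fix x y assume "x \<in> X" "y \<in> X"
  then show "(R_map X G T \<Lambda>) x y \<in> X" using mR_Ltr permutes_in_image[OF Ltr_R_perm] by metis
next
  fix x y assume "\<not> (x \<in> X \<and> y \<in> X)"
  then show "(R_map X G T \<Lambda>) x y = undefined" unfolding R_map_def by auto
next
  fix x assume x: "x \<in> X"
  have b: "bij_betw (Ltr X (R_map X G T \<Lambda>) x) X X" using permutes_imp_bij[OF Ltr_R_perm[OF x]] .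
  have "bij_betw (Ltr X (R_map X G T \<Lambda>) x) X X = bij_betw ((R_map X G T \<Lambda>) x) X X"
    by (rule bij_betw_cong) (simp add: Ltr_def)
  then show "bij_betw ((R_map X G T \<Lambda>) x) X X" using b by simp
next
  fix x y z assume xyz: "x \<in> X" "y \<in> X" "z \<in> X"
  have Lp: "Ltr X (R_map X G T \<Lambda>) x permutes X" by (rule Ltr_R_perm[OF xyz(1)])
  have yz: "(R_map X G T \<Lambda>) y z \<in> X" "(R_map X G T \<Lambda>) x y \<in> X" "(R_map X G T \<Lambda>) x z \<in> X"
    using xyz mR_Ltr permutes_in_image[OF Ltr_R_perm] by metis+
  have "(R_map X G T \<Lambda>) x ((R_map X G T \<Lambda>) y z) = Ltr X (R_map X G T \<Lambda>) x (Ltr X (R_map X G T \<Lambda>) y z)" using xyz yz mR_Ltr by simp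
  also have "\<dots> = (Ltr X (R_map X G T \<Lambda>) x \<circ> Ltr X (R_map X G T \<Lambda>) y \<circ> inv (Ltr X (R_map X G T \<Lambda>) x)) (Ltr X (R_map X G T \<Lambda>) x z)"
    using permutes_inverses(2)[OF Lp] by simp
  also have "\<dots> = Ltr X (R_map X G T \<Lambda>) (Ltr X (R_map X G T \<Lambda>) x y) (Ltr X (R_map X G T \<Lambda>) x z)"
    using Ltr_R_conj[OF Ltr_R_G[OF xyz(1)] xyz(2)] by simp
  also have "\<dots> = (R_map X G T \<Lambda>) ((R_map X G T \<Lambda>) x y) ((R_map X G T \<Lambda>) x z)" using xyz yz mR_Ltr by simp
  finally show "(R_map X G T \<Lambda>) x ((R_map X G T \<Lambda>) y z) = (R_map X G T \<Lambda>) ((R_map X G T \<Lambda>) x y) ((R_map X G T \<Lambda>) x z)" .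
qed

lemma gens_eq: "{Ltr X (R_map X G T \<Lambda>) y | y. y \<in> X} = (\<Union>x\<in>T. {conj_perm (\<Lambda> x) g | g. g \<in> G})"
proof (rule set_eqI, rule iffI)
  fix f assume "f \<in> {Ltr X (R_map X G T \<Lambda>) y | y. y \<in> X}"
  then obtain y where y: "y \<in> X" "f = Ltr X (R_map X G T \<Lambda>) y" by blast
  obtain x g where "x \<in> T" "g \<in> G" "Ltr X (R_map X G T \<Lambda>) y = conj_perm (\<Lambda> x) g"
    using Ltr_R_all[OF y(1)] by blast
  then show "f \<in> (\<Union>x\<in>T. {conj_perm (\<Lambda> x) g | g. g \<in> G})" using y(2) by blast
next
  fix f assume "f \<in> (\<Union>x\<in>T. {conj_perm (\<Lambda> x) g | g. g \<in> G})"
  then obtain x g where x: "x \<in> T" "g \<in> G" "f = conj_perm (\<Lambda> x) g" by blast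
  have "g x \<in> X" using permutes_in_image[OF ps_perm[OF PS x(2)]] TX x(1) by blast
  moreover have "f = Ltr X (R_map X G T \<Lambda>) (g x)" using Ltr_R[OF x(1,2)] x(3) by simp
  ultimately show "f \<in> {Ltr X (R_map X G T \<Lambda>) y | y. y \<in> X}" by blast
qed

lemma LMlt_R: "envelope_gen G T \<Lambda> \<Longrightarrow> LMlt X (R_map X G T \<Lambda>) = G"
  unfolding LMlt_def envelope_gen_def gens_eq by simp

lemma E_R: "E_map X T (R_map X G T \<Lambda>) = \<Lambda>"
proof
  fix x
  show "E_map X T (R_map X G T \<Lambda>) x = \<Lambda> x"
  proof (cases "x \<in> T")
    case True
    then show ?thesis unfolding E_map_def using Ltr_R[OF True ps_id[OF PS]] by simp
  next
    case False
    then show ?thesis using RF unfolding E_map_def rack_folder_def by simp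
  qed
qed

end


lemma Ltr_eq: "y \<in> X \<Longrightarrow> Ltr X m x y = m x y"
  unfolding Ltr_def by simp

context
  fixes X and m :: "'a \<Rightarrow> 'a \<Rightarrow> 'a"
  assumes RK: "rack X m"
begin

lemma opX: "x \<in> X \<Longrightarrow> y \<in> X \<Longrightarrow> m x y \<in> X"
  using RK unfolding rack_def left_quasigroup_def op_on_def by blast

lemma Ltr_perm: "x \<in> X \<Longrightarrow> Ltr X m x permutes X"
proof (rule bij_imp_permutes)
  assume x: "x \<in> X"
  have "bij_betw (m x) X X" using RK x unfolding rack_def left_quasigroup_def by blast
  moreover have "bij_betw (Ltr X m x) X X = bij_betw (m x) X X"
    by (rule bij_betw_cong) (simp add: Ltr_def)
  ultimately show "bij_betw (Ltr X m x) X X" by simp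
qed (simp add: Ltr_def)

lemma aut:
  "g \<in> gen_perm {Ltr X m x | x. x \<in> X} \<Longrightarrow>
     g permutes X \<and> (\<forall>a\<in>X. \<forall>b\<in>X. g (m a b) = m (g a) (g b))"
proof (induction rule: gen_perm.induct)
  case gen_id
  then show ?case using permutes_id[of X, unfolded id_def] by simp
next
  case (gen_base f)
  then obtain x where x: "x \<in> X" "f = Ltr X m x" by blast
  have "\<forall>a\<in>X. \<forall>b\<in>X. f (m a b) = m (f a) (f b)"
  proof (intro ballI)
    fix a b assume ab: "a \<in> X" "b \<in> X"
    have d: "m x (m a b) = m (m x a) (m x b)" using RK x ab unfolding rack_def by blast
    show "f (m a b) = m (f a) (f b)" unfolding x(2) using d ab x(1) opX by (simp add: Ltr_eq)
  qed
  then show ?case using Ltr_perm x by blast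
next
  case (gen_comp f g)
  then have fp: "f permutes X" "g permutes X"
    and fa: "\<forall>a\<in>X. \<forall>b\<in>X. f (m a b) = m (f a) (f b)"
    and ga: "\<forall>a\<in>X. \<forall>b\<in>X. g (m a b) = m (g a) (g b)" by auto
  have "\<forall>a\<in>X. \<forall>b\<in>X. (g \<circ> f) (m a b) = m ((g \<circ> f) a) ((g \<circ> f) b)"
  proof (intro ballI)
    fix a b assume ab: "a \<in> X" "b \<in> X"
    have "f a \<in> X" "f b \<in> X" using ab permutes_in_image[OF fp(1)] by auto
    then show "(g \<circ> f) (m a b) = m ((g \<circ> f) a) ((g \<circ> f) b)" using fa ga ab by simp
  qed
  then show ?case using permutes_compose[OF fp] by blast
next
  case (gen_inv f)
  then have fp: "f permutes X" and fa: "\<forall>a\<in>X. \<forall>b\<in>X. f (m a b) = m (f a) (f b)" by auto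
  have "\<forall>a\<in>X. \<forall>b\<in>X. inv f (m a b) = m (inv f a) (inv f b)"
  proof (intro ballI)
    fix a b assume ab: "a \<in> X" "b \<in> X"
    have ia: "inv f a \<in> X" "inv f b \<in> X" using ab permutes_in_image[OF permutes_inv[OF fp]] by auto
    have "f (m (inv f a) (inv f b)) = m a b" using fa ia permutes_inverses(1)[OF fp] by simp
    then show "inv f (m a b) = m (inv f a) (inv f b)" using permutes_inverses(2)[OF fp] by metis
  qed
  then show ?case using permutes_inv[OF fp] by blast
qed

lemma aut_conj:
  assumes "g \<in> gen_perm {Ltr X m x | x. x \<in> X}" "x \<in> X"
  shows "conj_perm (Ltr X m x) g = Ltr X m (g x)"
proof
  fix z
  have gp: "g permutes X" and ga: "\<forall>a\<in>X. \<forall>b\<in>X. g (m a b) = m (g a) (g b)" using aut[OF assms(1)] by auto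
  show "conj_perm (Ltr X m x) g z = Ltr X m (g x) z"
  proof (cases "z \<in> X")
    case True
    have iz: "inv g z \<in> X" using True permutes_in_image[OF permutes_inv[OF gp]] by auto
    then show ?thesis unfolding conj_perm_def using True ga assms(2)
      by (simp add: Ltr_eq permutes_inverses(1)[OF gp])
  next
    case False
    then show ?thesis unfolding conj_perm_def Ltr_def
      using permutes_not_in[OF gp] permutes_not_in[OF permutes_inv[OF gp]] by simp
  qed
qed

context
  fixes G T
  assumes PS: "perm_subgroup X G" and OR: "orbit_reps X G T" and LM: "LMlt X m = G"
begin

lemma TX': "T \<subseteq> X" using OR unfolding orbit_reps_def by blast

lemma GL: "G = gen_perm {Ltr X m x | x. x \<in> X}" using LM unfolding LMlt_def by simp

lemma LtrG: "x \<in> X \<Longrightarrow> Ltr X m x \<in> G" unfolding GL by (auto intro: gen_base)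

lemma Ltr_comm:
  assumes "x \<in> X" "h \<in> G" "h x = x"
  shows "Ltr X m x \<circ> h = h \<circ> Ltr X m x"
proof -
  have hp: "h permutes X" using ps_perm[OF PS assms(2)] .
  have "h \<circ> Ltr X m x \<circ> inv h = Ltr X m x" using aut_conj[OF assms(2)[unfolded GL] assms(1)] assms(3)
    unfolding conj_perm_def by simp
  then have "h \<circ> Ltr X m x \<circ> inv h \<circ> h = Ltr X m x \<circ> h" by simp
  then show ?thesis using permutes_inv_o(2)[OF hp] by (simp add: o_assoc[symmetric])
qed

lemma E_folder: "rack_folder X G T (E_map X T m)"
  unfolding rack_folder_def centralizer_def stabilizer_def E_map_def
  using PS LtrG Ltr_comm TX' by auto

lemma E_gen: "envelope_gen G T (E_map X T m)"
proof -
  have "(\<Union>x\<in>T. {conj_perm (E_map X T m x) g | g. g \<in> G}) = {Ltr X m y | y. y \<in> X}"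
  proof (rule set_eqI, rule iffI)
    fix f assume "f \<in> (\<Union>x\<in>T. {conj_perm (E_map X T m x) g | g. g \<in> G})"
    then obtain x g where x: "x \<in> T" "g \<in> G" "f = conj_perm (Ltr X m x) g" unfolding E_map_def by auto
    have "g x \<in> X" using permutes_in_image[OF ps_perm[OF PS x(2)]] TX' x(1) by blast
    then show "f \<in> {Ltr X m y | y. y \<in> X}" using aut_conj[OF x(2)[unfolded GL]] x TX' by blast
  next
    fix f assume "f \<in> {Ltr X m y | y. y \<in> X}"
    then obtain y where y: "y \<in> X" "f = Ltr X m y" by blast
    from rep_of_props[OF OR y(1)] obtain x where "x \<in> T" "y \<in> orbit G x" by blast
    then obtain g where g: "g \<in> G" "y = g x" unfolding orbit_def by blast
    have "f = conj_perm (E_map X T m x) g"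
      using aut_conj[OF g(1)[unfolded GL]] \<open>x \<in> T\<close> TX' g y unfolding E_map_def by auto
    then show "f \<in> (\<Union>x\<in>T. {conj_perm (E_map X T m x) g | g. g \<in> G})" using \<open>x \<in> T\<close> g by blast
  qed
  then show ?thesis unfolding envelope_gen_def by (simp only:) (rule GL[symmetric])
qed

lemma R_E: "R_map X G T (E_map X T m) = m"
proof (intro ext)
  fix y z
  show "R_map X G T (E_map X T m) y z = m y z"
  proof (cases "y \<in> X \<and> z \<in> X")
    case True
    define x where "x = rep_of G T y"
    from rep_of_props[OF OR] True have x: "x \<in> T" "y \<in> orbit G x" unfolding x_def by auto
    then have ex: "\<exists>g. g \<in> G \<and> g x = y" unfolding orbit_def by blast
    define g where "g = (SOME g. g \<in> G \<and> g x = y)"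
    have g: "g \<in> G \<and> g x = y" unfolding g_def by (rule someI_ex[OF ex])
    have "R_map X G T (E_map X T m) y z = conj_perm (Ltr X m x) g z"
      using True x unfolding R_map_def E_map_def by (simp add: x_def[symmetric] g_def[symmetric] Let_def)
    also have "\<dots> = Ltr X m y z" using aut_conj[of g x] g GL x TX' by auto
    finally show ?thesis using True by (simp add: Ltr_eq)
  next
    case False
    then show ?thesis using RK unfolding R_map_def rack_def left_quasigroup_def op_on_def by auto
  qed
qed

end
end

lemma center_sub: "center (stabilizer G x) \<subseteq> centralizer G (stabilizer G x)"
  unfolding center_def centralizer_def stabilizer_def by auto

lemma qf_rf:
  assumes "quandle_folder X G T \<Lambda>" shows "rack_folder X G T \<Lambda>"
  unfolding rack_folder_def
proof (intro conjI ballI allI impI)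
  show "perm_subgroup X G" using assms unfolding quandle_folder_def by blast
next
  fix x assume "x \<in> T"
  then have "\<Lambda> x \<in> center (stabilizer G x)" using assms unfolding quandle_folder_def by blast
  then show "\<Lambda> x \<in> centralizer G (stabilizer G x)" using center_sub[of G x] by (rule subsetD[rotated])
next
  fix x assume "x \<notin> T"
  then show "\<Lambda> x = id" using assms unfolding quandle_folder_def by blast
qed

theorem theorem3p4:
  fixes X :: "'a set" and G :: "('a \<Rightarrow> 'a) set" and T :: "'a set"
  assumes "X \<noteq> {}" and "perm_subgroup X G" and "orbit_reps X G T"
  shows
    "(\<forall>m. rack X m \<and> LMlt X m = G \<longrightarrow>
          rack_envelope X G T (E_map X T m) \<and> R_map X G T (E_map X T m) = m)
   \<and> (\<forall>\<Lambda>. rack_envelope X G T \<Lambda> \<longrightarrow>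
          rack X (R_map X G T \<Lambda>) \<and> LMlt X (R_map X G T \<Lambda>) = G
          \<and> E_map X T (R_map X G T \<Lambda>) = \<Lambda>)
   \<and> (\<forall>m. quandle X m \<and> LMlt X m = G \<longrightarrow>
          quandle_envelope X G T (E_map X T m) \<and> R_map X G T (E_map X T m) = m)
   \<and> (\<forall>\<Lambda>. quandle_envelope X G T \<Lambda> \<longrightarrow>
          quandle X (R_map X G T \<Lambda>) \<and> LMlt X (R_map X G T \<Lambda>) = G
          \<and> E_map X T (R_map X G T \<Lambda>) = \<Lambda>)"
proof (intro conjI allI impI)
  fix m assume h: "rack X m \<and> LMlt X m = G"
  then show "rack_envelope X G T (E_map X T m)" unfolding rack_envelope_def
    using E_folder E_gen assms by blast
  show "R_map X G T (E_map X T m) = m" using R_E h assms by blast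
next
  fix \<Lambda> assume h: "rack_envelope X G T \<Lambda>"
  then have rf: "rack_folder X G T \<Lambda>" and eg: "envelope_gen G T \<Lambda>" unfolding rack_envelope_def by auto
  show "rack X (R_map X G T \<Lambda>)" using rack_R[OF assms(2,3) rf] .
  show "LMlt X (R_map X G T \<Lambda>) = G" using LMlt_R[OF assms(2,3) rf eg] .
  show "E_map X T (R_map X G T \<Lambda>) = \<Lambda>" using E_R[OF assms(2,3) rf] .
next
  fix m assume h: "quandle X m \<and> LMlt X m = G"
  then have rk: "rack X m" and lm: "LMlt X m = G" and idm: "\<forall>x\<in>X. m x x = x" unfolding quandle_def by auto
  have rf: "rack_folder X G T (E_map X T m)" using E_folder[OF rk assms(2,3) lm] .
  have "\<forall>x\<in>T. E_map X T m x \<in> center (stabilizer G x)"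
  proof
    fix x assume x: "x \<in> T"
    have xX: "x \<in> X" using x TX'[OF rk assms(2,3) lm] by blast
    have "Ltr X m x \<in> stabilizer G x" unfolding stabilizer_def
      using LtrG[OF rk assms(2,3) lm xX] idm xX by (simp add: Ltr_eq)
    then show "E_map X T m x \<in> center (stabilizer G x)"
      unfolding center_def centralizer_def E_map_def using x Ltr_comm[OF rk assms(2,3) lm xX]
      unfolding stabilizer_def by auto
  qed
  then show "quandle_envelope X G T (E_map X T m)" unfolding quandle_envelope_def quandle_folder_def
    using rf E_gen[OF rk assms(2,3) lm] unfolding rack_folder_def by blast
  show "R_map X G T (E_map X T m) = m" using R_E[OF rk assms(2,3) lm] .
next
  fix \<Lambda> assume h: "quandle_envelope X G T \<Lambda>"
  then have qf: "quandle_folder X G T \<Lambda>" and eg: "envelope_gen G T \<Lambda>" unfolding quandle_envelope_def by auto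
  have rf: "rack_folder X G T \<Lambda>" using qf_rf[OF qf] .
  have "\<forall>y\<in>X. R_map X G T \<Lambda> y y = y"
  proof
    fix y assume y: "y \<in> X"
    obtain x g where x: "x \<in> T" "g \<in> G" "g x = y" "Ltr X (R_map X G T \<Lambda>) y = conj_perm (\<Lambda> x) g"
      using Ltr_R_all[OF assms(2,3) rf y] by blast
    have gp: "g permutes X" using ps_perm[OF assms(2) x(2)] .
    have lx: "\<Lambda> x x = x" using qf x(1) unfolding quandle_folder_def center_def centralizer_def stabilizer_def by blast
    have "R_map X G T \<Lambda> y y = conj_perm (\<Lambda> x) g y" using x(4) y by (metis Ltr_eq)
    also have "\<dots> = y" unfolding conj_perm_def using x(3) lx permutes_inverses(2)[OF gp] by auto
    finally show "R_map X G T \<Lambda> y y = y" .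
  qed
  then show "quandle X (R_map X G T \<Lambda>)" unfolding quandle_def using rack_R[OF assms(2,3) rf] by blast
  show "LMlt X (R_map X G T \<Lambda>) = G" using LMlt_R[OF assms(2,3) rf eg] .
  show "E_map X T (R_map X G T \<Lambda>) = \<Lambda>" using E_R[OF assms(2,3) rf] .
qed

end
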